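(* Assume the two-system setup with a steady-state map $x_2^s$ defined on all of $\mathbb{R}^{n_1}$, and let $(x_1^s,x_2^s(x_1^s))$ be a steady state. Assume $f_1,f_2$ are globally Lipschitz continuous and there exist symmetric positive definite matrices $P_1,Q_1\in\mathbb{R}^{n_1\times n_1}$, $P_2,Q_2\in\mathbb{R}^{n_2\times n_2}$ such that for all $x_1,x_2$: $$P_1\nabla_{x_1}f_1^r(x_1)+\nabla_{x_1}f_1^r(x_1)^TP_1\preceq -Q_1,\qquad P_2\nabla_{x_2}f_2(x_1,x_2)+\nabla_{x_2}f_2(x_1,x_2)^TP_2\preceq -Q_2.$$ Then $(x_1^s,x_2^s(x_1^s))$ is a globally exponentially stable equilibrium of the predictive-sensitivity system. Moreover, the time-scale separated system is globally exponentially stable in the sense that $x_1^s$ is a globally exponentially stable equilibrium of $\dot x_1=f_1^r(x_1)$ and, for every fixed $x_1$, $x_2^s(x_1)$ is a globally exponentially stable equilibrium of $\dot x_2=f_2(x_1,x_2)$.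
   Context: Two-system setup: Let $f_1:\mathbb{R}^{n_1}\times\mathbb{R}^{n_2}\to\mathbb{R}^{n_1}$ and $f_2:\mathbb{R}^{n_1}\times\mathbb{R}^{n_2}\to\mathbb{R}^{n_2}$ be continuously differentiable, and assume $\nabla_{x_2}f_2(x_1,x_2)$ is invertible for all $(x_1,x_2)$. Define the extended sensitivity $S_{x_1}^{x_2}(x_1,x_2):=-\nabla_{x_2}f_2(x_1,x_2)^{-1}\nabla_{x_1}f_2(x_1,x_2)\in\mathbb{R}^{n_2\times n_1}$. The predictive-sensitivity system is $$\begin{bmatrix} I&0\\ -S_{x_1}^{x_2}(x_1,x_2)&I\end{bmatrix}\begin{bmatrix}\dot x_1\\ \dot x_2\end{bmatrix}=\begin{bmatrix}f_1(x_1,x_2)\\ f_2(x_1,x_2)\end{bmatrix},$$ i.e. $\dot x_1=f_1(x_1,x_2)$, $\dot x_2=f_2(x_1,x_2)+S_{x_1}^{x_2}(x_1,x_2)f_1(x_1,x_2)$; it is assumed that this right-hand side is locally Lipschitz continuous. A steady-state map is a continuously differentiable map $x_2^s$ defined on an open set $U\subseteq\mathbb{R}^{n_1}$ with $f_2(x_1,x_2^s(x_1))=0$ for all $x_1\in U$ (then $\nabla_{x_1}x_2^s(x_1)=S_{x_1}^{x_2}(x_1,x_2^s(x_1))$). The reduced vector field is $f_1^r(x_1):=f_1(x_1,x_2^s(x_1))$, with Jacobian $\nabla_{x_1}f_1^r(x_1)=\nabla_{x_1}f_1(x_1,x_2^s(x_1))+\nabla_{x_2}f_1(x_1,x_2^s(x_1))\nabla_{x_1}x_2^s(x_1)$.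 A steady state is a point $(x_1^s,x_2^s(x_1^s))$ with $f_1^r(x_1^s)=0$. *)

theory Defs
  imports "HOL-Analysis.Analysis"
begin

definition mat_le :: "real^'n^'n \<Rightarrow> real^'n^'n \<Rightarrow> bool" where
  "mat_le A B \<longleftrightarrow> (\<forall>v. v \<bullet> (A *v v) \<le> v \<bullet> (B *v v))"

definition sym_pos_def :: "real^'n^'n \<Rightarrow> bool" where
  "sym_pos_def P \<longleftrightarrow> transpose P = P \<and> (\<forall>v. v \<noteq> 0 \<longrightarrow> 0 < v \<bullet> (P *v v))"

definition ode_sol :: "('a::real_normed_vector \<Rightarrow> 'a) \<Rightarrow> (real \<Rightarrow> 'a) \<Rightarrow> bool" where
  "ode_sol F x \<longleftrightarrow> (\<forall>t\<ge>0. (x has_vector_derivative F (x t)) (at t within {0..}))"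

definition GES :: "('a::real_normed_vector \<Rightarrow> 'a) \<Rightarrow> 'a \<Rightarrow> bool" where
  "GES F xe \<longleftrightarrow> F xe = 0 \<and> (\<forall>x0. \<exists>x. ode_sol F x \<and> x 0 = x0) \<and>
     (\<exists>M>0. \<exists>lam>0. \<forall>x. ode_sol F x \<longrightarrow>
        (\<forall>t\<ge>0. norm (x t - xe) \<le> M * exp (- lam * t) * norm (x 0 - xe)))"

end

theory Submission
  imports Defs
begin


lemma decay_lemma:
  fixes V V' :: "real \<Rightarrow> real"
  assumes T: "0 \<le> T"
    and d: "\<And>t. t \<in> {0..T} \<Longrightarrow> (V has_real_derivative V' t) (at t within {0..T})"
    and le: "\<And>t. t \<in> {0..T} \<Longrightarrow> V' t \<le> - c * V t"
    and t: "t \<in> {0..T}"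
  shows "V t \<le> V 0 * exp (- c * t)"
proof -
  define h where "h s = V s * exp (c * s)" for s
  have dh: "(h has_real_derivative (V' s * exp (c * s) + V s * (c * exp (c * s)))) (at s within {0..T})"
    if "s \<in> {0..T}" for s
    unfolding h_def using d[OF that]
    by (auto intro!: derivative_eq_intros)
  have cont: "continuous_on {0..T} h"
    unfolding continuous_on_eq_continuous_within
  proof
    fix s assume "s \<in> {0..T}"
    from DERIV_continuous[OF dh[OF this]] show "continuous (at s within {0..T}) h" .
  qed
  have "h t \<le> h 0"
  proof (rule DERIV_nonpos_imp_decreasing_open[of 0 t h])
    show "0 \<le> t" using t by simp
    show "continuous_on {0..t} h" using cont t by (auto intro: continuous_on_subset)
    fix x assume x: "0 < x" "x < t"
    have "at x within {0..T} = at x" using x t by (intro at_within_Icc_at) auto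
    then have "DERIV h x :> (V' x * exp (c*x) + V x * (c * exp (c * x)))"
      using dh[of x] x t by auto
    moreover have "V' x * exp (c*x) + V x * (c * exp (c * x)) \<le> 0"
    proof -
      have "V' x + c * V x \<le> 0" using le[of x] x t by auto
      then have "(V' x + c * V x) * exp (c*x) \<le> 0" by (simp add: mult_nonpos_nonneg)
      then show ?thesis by (simp add: algebra_simps)
    qed
    ultimately show "\<exists>y. DERIV h x :> y \<and> y \<le> 0" by blast
  qed
  then have "V t * exp (c * t) \<le> V 0" by (simp add: h_def)
  then have "V t * exp (c * t) * exp (- c * t) \<le> V 0 * exp (- c * t)" by simp
  then show ?thesis by (simp add: mult.assoc flip: exp_add)
qed

lemma inner_mat_sym: "transpose P = P \<Longrightarrow> (u::real^'n) \<bullet> (P *v w) = w \<bullet> (P *v u)"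
  by (metis dot_lmul_matrix inner_commute transpose_matrix_vector)

lemma lyap_deriv:
  fixes x :: "real \<Rightarrow> real^'n"
  assumes P: "transpose P = P" and d: "(x has_vector_derivative x') (at t within s)"
  shows "((\<lambda>t. (x t - e) \<bullet> (P *v (x t - e))) has_real_derivative 2 * ((x t - e) \<bullet> (P *v x'))) (at t within s)"
proof -
  have lin: "bounded_linear (\<lambda>v. P *v (v::real^'n))"
    by (simp add: matrix_vector_mul_bounded_linear)
  have "((\<lambda>t. x t - e) has_vector_derivative x') (at t within s)"
    using d by (auto intro!: derivative_eq_intros)
  then have d2: "((\<lambda>t. P *v (x t - e)) has_vector_derivative P *v x') (at t within s)"
    using bounded_linear.has_vector_derivative[OF lin] by blast
  have i1: "((\<lambda>t. x t - e) has_derivative (\<lambda>h. h *\<^sub>R x')) (at t within s)"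
    using \<open>((\<lambda>t. x t - e) has_vector_derivative x') (at t within s)\<close>
    by (simp add: has_vector_derivative_def)
  have i2: "((\<lambda>t. P *v (x t - e)) has_derivative (\<lambda>h. h *\<^sub>R (P *v x'))) (at t within s)"
    using d2 by (simp add: has_vector_derivative_def)
  have sym: "x' \<bullet> (P *v (x t - e)) = (x t - e) \<bullet> (P *v x')" using inner_mat_sym[OF P] by simp
  show ?thesis
    unfolding has_field_derivative_def
    apply (rule has_derivative_eq_rhs)
     apply (rule has_derivative_inner[OF i1 i2])
    by (simp only: fun_eq_iff inner_scaleR_left inner_scaleR_right sym) (simp add: algebra_simps)
qed


lemma mat_bound: "\<exists>B>0. \<forall>v. norm ((A::real^'n^'m) *v v) \<le> B * norm v"
  using linear_bounded_pos[OF matrix_vector_mul_linear[of A]] by metis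

lemma cont_quad: "continuous_on S (\<lambda>v::real^'n. v \<bullet> (P *v v))"
proof -
  have "bounded_linear (\<lambda>v. P *v (v::real^'n))"
    by (simp add: matrix_vector_mul_bounded_linear)
  then have "continuous_on S (\<lambda>v::real^'n. P *v v)"
    by (simp add: linear_continuous_on)
  then show ?thesis by (intro continuous_intros)
qed

lemma posdef_lower:
  assumes "sym_pos_def (P::real^'n^'n)"
  shows "\<exists>m>0. \<forall>v. m * (norm v)^2 \<le> v \<bullet> (P *v v)"
proof -
  have pos: "\<And>v. v \<noteq> 0 \<Longrightarrow> 0 < v \<bullet> (P *v v)" using assms by (simp add: sym_pos_def_def)
  have ne: "sphere (0::real^'n) 1 \<noteq> {}" by simp
  obtain u where u: "u \<in> sphere 0 1" and umin: "\<And>y. y \<in> sphere 0 1 \<Longrightarrow> u \<bullet> (P *v u) \<le> y \<bullet> (P *v y)"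
    using continuous_attains_inf[OF compact_sphere ne cont_quad] by blast
  define m where "m = u \<bullet> (P *v u)"
  have "u \<noteq> 0" using u by auto
  then have m: "m > 0" using pos m_def by auto
  have "m * (norm v)^2 \<le> v \<bullet> (P *v v)" for v
  proof (cases "v = 0")
    case True then show ?thesis by simp
  next
    case False
    define w where "w = (1 / norm v) *\<^sub>R v"
    have "w \<in> sphere 0 1" using False by (simp add: w_def)
    then have "m \<le> w \<bullet> (P *v w)" using umin m_def by auto
    also have "w \<bullet> (P *v w) = (v \<bullet> (P *v v)) / (norm v)^2"
      by (simp add: w_def matrix_vector_mult_scaleR power2_eq_square)
    finally show ?thesis using False by (simp add: field_simps)
  qed
  with m show ?thesis by blast
qed

lemma lmi_quad:
  assumes "mat_le (P ** J + transpose J ** P) (- Q)" "transpose P = P"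
  shows "2 * (v \<bullet> (P *v (J *v v))) \<le> - (v \<bullet> (Q *v (v::real^'n)))"
proof -
  have "v \<bullet> ((P ** J + transpose J ** P) *v v) \<le> v \<bullet> ((- Q) *v v)"
    using assms(1) by (simp add: mat_le_def)
  moreover have "v \<bullet> ((P ** J + transpose J ** P) *v v) = 2 * (v \<bullet> (P *v (J *v v)))"
  proof -
    have "v \<bullet> ((transpose J ** P) *v v) = v \<bullet> (P *v (J *v v))"
    proof -
      have "v \<bullet> ((transpose J ** P) *v v) = v \<bullet> (transpose J *v (P *v v))"
        by (simp add: matrix_vector_mul_assoc)
      also have "\<dots> = (J *v v) \<bullet> (P *v v)"
        by (metis dot_lmul_matrix inner_commute transpose_matrix_vector)
      also have "\<dots> = v \<bullet> (P *v (J *v v))"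
        using inner_mat_sym[OF assms(2)] by (simp add: inner_commute)
      finally show ?thesis .
    qed
    then show ?thesis
      by (simp add: matrix_vector_mult_add_rdistrib inner_add_right matrix_vector_mul_assoc)
  qed
  moreover have "v \<bullet> ((- Q) *v v) = - (v \<bullet> (Q *v v))"
    using matrix_vector_mult_diff_rdistrib[of 0 Q v] by simp
  ultimately show ?thesis by linarith
qed


lemma int_bound_exp:
  fixes H :: "real \<Rightarrow> 'a::euclidean_space"
  assumes K: "K > 0" and t: "0 \<le> t" and cH: "continuous_on {0..t} H"
    and le: "\<And>s. s \<in> {0..t} \<Longrightarrow> norm (H s) \<le> A + B * exp (K * s)"
  shows "norm (integral {0..t} H) \<le> A * t + B * (exp (K * t) - 1) / K"
proof -
  have d: "((\<lambda>s. A * s + B * exp (K * s) / K) has_vector_derivative (A + B * exp (K * s))) (at s within {0..t})" for s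
    using K by (auto intro!: derivative_eq_intros simp: has_real_derivative_iff_has_vector_derivative[symmetric])
  have hi: "((\<lambda>s. A + B * exp (K * s)) has_integral (A * t + B * exp (K * t) / K - (A * 0 + B * exp (K * 0) / K))) {0..t}"
    by (rule fundamental_theorem_of_calculus[OF t d])
  have "norm (integral {0..t} H) \<le> integral {0..t} (\<lambda>s. A + B * exp (K * s))"
    apply (rule integral_norm_bound_integral)
    using integrable_continuous_real[OF cH] hi le by auto
  also have "\<dots> = A * t + B * (exp (K * t) - 1) / K"
  proof -
    have e: "integral {0..t} (\<lambda>s. A + B * exp (K * s)) = A * t + B * exp (K * t) / K - B / K"
      using integral_unique[OF hi] by simp
    show ?thesis by (simp only: e diff_divide_distrib right_diff_distrib mult_1_right)
  qed
  finally show ?thesis .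
qed

lemma cont_int_max:
  fixes h :: "real \<Rightarrow> 'a::euclidean_space"
  assumes "continuous_on UNIV h"
  shows "continuous_on UNIV (\<lambda>t. integral {0..max t 0} h)"
proof -
  have "isCont (\<lambda>t. integral {0..max t 0} h) t" for t
  proof -
    define b where "b = \<bar>t\<bar> + 1"
    have "continuous_on {0..b} (\<lambda>u. integral {0..u} h)"
      by (rule indefinite_integral_continuous_1, rule integrable_continuous_real)
        (rule continuous_on_subset[OF assms], simp)
    then have "continuous_on {-b..b} (\<lambda>s. integral {0..max s 0} h)"
      by (rule continuous_on_compose2[where f="\<lambda>s. max s 0"])
        (auto intro!: continuous_intros simp: b_def)
    moreover have "t \<in> interior {-b..b}" using abs_ge_self[of t] abs_ge_minus_self[of t] by (simp add: b_def)
    ultimately show ?thesis by (rule continuous_on_interior)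
  qed
  then show ?thesis by (simp add: continuous_at_imp_continuous_on)
qed

lemma int_deriv0:
  fixes h :: "real \<Rightarrow> 'a::euclidean_space"
  assumes "continuous_on UNIV h" "0 \<le> t"
  shows "((\<lambda>u. integral {0..u} h) has_vector_derivative h t) (at t within {0..})"
proof -
  have "((\<lambda>u. integral {0..u} h) has_vector_derivative h t) (at t within {0..t+1})"
    by (rule integral_has_vector_derivative) (auto intro: continuous_on_subset[OF assms(1)] simp: assms(2))
  moreover have "at t within {0..t+1} = at t within {0..}"
  proof (cases "t = 0")
    case True then show ?thesis by (simp add: at_within_Icc_at_right at_within_Ici_at_right)
  next
    case False
    then have "at t within {0..t+1} = at t" using assms(2) by (intro at_within_Icc_at) auto
    moreover have "at t within {0..} = at t" using assms(2) False
      by (intro at_within_interior) auto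
    ultimately show ?thesis by simp
  qed
  ultimately show ?thesis by simp
qed

lemma lip_exists:
  fixes F :: "'a::euclidean_space \<Rightarrow> 'a"
  assumes lip: "L-lipschitz_on UNIV F"
  shows "\<exists>x. ode_sol F x \<and> x 0 = x0"
proof -
  have L0: "0 \<le> L" using lipschitz_on_nonneg[OF lip] .
  define K where "K = 2 * L + 1"
  have K: "K > 0" using L0 by (simp add: K_def)
  have cF: "continuous_on UNIV F" using lipschitz_on_continuous_on[OF lip] .
  have Fl: "norm (F a - F b) \<le> L * norm (a - b)" for a b
    using lipschitz_on_normD[OF lip] by auto
  define X where "X g t = x0 + exp (K * t) *\<^sub>R apply_bcontfun g t" for g :: "real \<Rightarrow>\<^sub>C 'a" and t
  define Pf where "Pf g t = exp (- K * max t 0) *\<^sub>R integral {0..max t 0} (\<lambda>s. F (X g s))" for g t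
  have cX: "continuous_on UNIV (\<lambda>s. F (X g s))" for g
    unfolding X_def by (rule continuous_on_compose2[OF cF]) (auto intro!: continuous_intros)
  have FXb: "norm (F (X g s)) \<le> norm (F x0) + L * norm g * exp (K * s)" for g s
  proof -
    have 1: "norm (F (X g s)) \<le> norm (F x0) + norm (F (X g s) - F x0)" by (rule norm_triangle_sub)
    have 2: "norm (F (X g s) - F x0) \<le> L * norm (X g s - x0)" by (rule Fl)
    have 3: "norm (X g s - x0) = exp (K * s) * norm (apply_bcontfun g s)" by (simp add: X_def)
    have 4: "exp (K * s) * norm (apply_bcontfun g s) \<le> exp (K * s) * norm g" by (simp add: norm_bounded)
    have "L * norm (X g s - x0) \<le> L * (exp (K * s) * norm g)"
      using 3 4 L0 by (simp add: mult_left_mono)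
    then show ?thesis using 1 2 by (simp add: algebra_simps)
  qed
  have texp: "t * exp (- K * t) \<le> 1 / K" if "0 \<le> t" for t
  proof -
    have "K * t \<le> exp (K * t)" using exp_ge_add_one_self[of "K*t"] by linarith
    then have "K * t * exp (- K * t) \<le> exp (K * t) * exp (- K * t)" by (simp add: mult_right_mono)
    also have "\<dots> = 1" by (simp flip: exp_add)
    finally show ?thesis using K by (simp add: field_simps)
  qed
  have Pf_bc: "Pf g \<in> bcontfun" for g
  proof -
    have c: "continuous_on UNIV (Pf g)"
      unfolding Pf_def by (intro continuous_intros cont_int_max cX)
    have b: "norm (Pf g t) \<le> norm (F x0) / K + L * norm g / K" for t
    proof -
      define u where "u = max t 0"
      have u: "0 \<le> u" by (simp add: u_def)
      have "norm (integral {0..u} (\<lambda>s. F (X g s))) \<le> norm (F x0) * u + L * norm g * (exp (K * u) - 1) / K"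
        using int_bound_exp[OF K u continuous_on_subset[OF cX] FXb] by auto
      then have "exp (- K * u) * norm (integral {0..u} (\<lambda>s. F (X g s)))
          \<le> exp (- K * u) * (norm (F x0) * u + L * norm g * (exp (K * u) - 1) / K)"
        by (simp add: mult_left_mono)
      also have "\<dots> = norm (F x0) * (u * exp (- K * u)) + L * norm g * (1 - exp (- K * u)) / K"
        by (simp add: field_simps flip: exp_add)
      also have "\<dots> \<le> norm (F x0) * (1 / K) + L * norm g * 1 / K"
        apply (intro add_mono mult_left_mono divide_right_mono texp u)
        using K L0 by auto
      finally show ?thesis by (simp add: Pf_def u_def)
    qed
    have "bounded (range (Pf g))"
      unfolding bounded_iff using b by blast
    then show ?thesis using c by (simp add: bcontfun_def)
  qed
  define Phi where "Phi g = Bcontfun (Pf g)" for g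
  have Phi_app: "apply_bcontfun (Phi g) = Pf g" for g
    by (simp add: Phi_def Bcontfun_inverse[OF Pf_bc])
  have contr: "dist (Phi g) (Phi h) \<le> (1/2) * dist g h" for g h
  proof (rule dist_bound)
    fix t :: real
    define u where "u = max t 0"
    have u: "0 \<le> u" by (simp add: u_def)
    have ig: "(\<lambda>s. F (X g s)) integrable_on {0..u}" "(\<lambda>s. F (X h s)) integrable_on {0..u}"
      by (rule integrable_continuous_real, rule continuous_on_subset[OF cX], simp)+
    have le: "norm (F (X g s) - F (X h s)) \<le> 0 + L * dist g h * exp (K * s)" for s
    proof -
      have 1: "norm (F (X g s) - F (X h s)) \<le> L * norm (X g s - X h s)" by (rule Fl)
      have 2: "norm (X g s - X h s) = exp (K * s) * dist (apply_bcontfun g s) (apply_bcontfun h s)"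
        by (simp add: X_def dist_norm flip: scaleR_diff_right)
      have 3: "exp (K * s) * dist (apply_bcontfun g s) (apply_bcontfun h s) \<le> exp (K * s) * dist g h" by (simp add: dist_bounded)
      have "L * norm (X g s - X h s) \<le> L * (exp (K * s) * dist g h)"
        using 2 3 L0 by (simp add: mult_left_mono)
      then show ?thesis using 1 by (simp add: algebra_simps)
    qed
    have "norm (integral {0..u} (\<lambda>s. F (X g s) - F (X h s))) \<le> 0 * u + L * dist g h * (exp (K * u) - 1) / K"
      by (rule int_bound_exp[OF K u _ le]) (intro continuous_intros continuous_on_subset[OF cX], auto)
    then have "norm (integral {0..u} (\<lambda>s. F (X g s)) - integral {0..u} (\<lambda>s. F (X h s))) \<le> L * dist g h * (exp (K * u) - 1) / K"
      by (simp add: integral_diff[OF ig])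
    then have "exp (- K * u) * norm (integral {0..u} (\<lambda>s. F (X g s)) - integral {0..u} (\<lambda>s. F (X h s)))
        \<le> exp (- K * u) * (L * dist g h * (exp (K * u) - 1) / K)"
      by (rule mult_left_mono) auto
    also have "\<dots> = L * dist g h * (1 - exp (- K * u)) / K"
      by (simp add: field_simps flip: exp_add)
    also have "\<dots> \<le> L * dist g h * 1 / K"
      apply (intro divide_right_mono mult_left_mono) using K L0 by auto
    also have "\<dots> \<le> (1/2) * dist g h"
      using K L0 by (simp add: K_def field_simps)
    finally show "dist (apply_bcontfun (Phi g) t) (apply_bcontfun (Phi h) t) \<le> (1/2) * dist g h"
      by (simp add: Phi_app Pf_def dist_norm u_def flip: scaleR_diff_right)
  qed
  obtain g where gfix: "Phi g = g"
    using banach_fix_type[of "1/2" Phi] contr by auto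
  have gt: "apply_bcontfun g t = Pf g t" for t using gfix Phi_app by metis
  have Xeq: "X g t = x0 + integral {0..t} (\<lambda>s. F (X g s))" if "0 \<le> t" for t
  proof -
    have "apply_bcontfun g t = exp (- K * t) *\<^sub>R integral {0..t} (\<lambda>s. F (X g s))"
      using gt[of t] that by (simp add: Pf_def max_def)
    then show ?thesis by (simp add: X_def[of g t] flip: exp_add)
  qed
  have "ode_sol F (X g)"
    unfolding ode_sol_def
  proof (intro allI impI)
    fix t :: real assume t: "0 \<le> t"
    have "((\<lambda>u. x0 + integral {0..u} (\<lambda>s. F (X g s))) has_vector_derivative F (X g t)) (at t within {0..})"
      using int_deriv0[OF cX t] by (auto intro!: derivative_eq_intros)
    then show "(X g has_vector_derivative F (X g t)) (at t within {0..})"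
      by (rule has_vector_derivative_transform_within[where d=1]) (use t Xeq in auto)
  qed
  moreover have "X g 0 = x0" using Xeq[of 0] by simp
  ultimately show ?thesis by blast
qed


definition sol_on :: "('a::real_normed_vector \<Rightarrow> 'a) \<Rightarrow> real \<Rightarrow> (real \<Rightarrow> 'a) \<Rightarrow> bool" where
  "sol_on F T y \<longleftrightarrow> (\<forall>t\<in>{0..T}. (y has_vector_derivative F (y t)) (at t within {0..T}))"

lemma ode_sol_sol_on: "ode_sol F x \<Longrightarrow> sol_on F T x"
  unfolding ode_sol_def sol_on_def
proof
  fix t assume "\<forall>t\<ge>0. (x has_vector_derivative F (x t)) (at t within {0..})" "t \<in> {0..T}"
  then have "(x has_vector_derivative F (x t)) (at t within {0..})" by auto
  then show "(x has_vector_derivative F (x t)) (at t within {0..T})"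
    by (rule has_vector_derivative_within_subset) auto
qed

lemma sol_on_cont: "sol_on F T y \<Longrightarrow> continuous_on {0..T} y"
  unfolding sol_on_def continuous_on_eq_continuous_within
  using has_vector_derivative_continuous by blast

lemma loc_lip_compact:
  fixes F :: "'a::euclidean_space \<Rightarrow> 'b::euclidean_space"
  assumes loc: "\<forall>z. \<exists>e>0. \<exists>L. L-lipschitz_on (ball z e) F" and X: "compact X"
  shows "\<exists>L. L-lipschitz_on X F"
proof -
  have ll: "local_lipschitz {0::real} X (\<lambda>_. F)"
  proof (rule local_lipschitzI)
    fix t x assume "t \<in> {0::real}" "x \<in> X"
    obtain e L where e: "e > 0" and L: "L-lipschitz_on (ball x e) F" using loc by blast
    have "L-lipschitz_on (cball x (e/2) \<inter> X) F"
      by (rule lipschitz_on_subset[OF L]) (use e in auto)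
    then show "\<exists>u>0. \<exists>L. \<forall>t\<in>cball t u \<inter> {0}. L-lipschitz_on (cball x u \<inter> X) ((\<lambda>_. F) t)"
      using e by (intro exI[of _ "e/2"]) auto
  qed
  obtain L where "\<And>t. t \<in> {0::real} \<Longrightarrow> L-lipschitz_on X ((\<lambda>_. F) t)"
    using local_lipschitz_compact_implies_lipschitz[OF ll X compact_sing] by auto
  then show ?thesis by auto
qed

lemma loc_exists:
  fixes F :: "'a::euclidean_space \<Rightarrow> 'a"
  assumes loc: "\<forall>z. \<exists>e>0. \<exists>L. L-lipschitz_on (ball z e) F"
    and apriori: "\<And>T y. 0 \<le> T \<Longrightarrow> sol_on F T y \<Longrightarrow> y 0 = x0 \<Longrightarrow> \<forall>t\<in>{0..T}. norm (y t) \<le> R"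
  shows "\<exists>x. ode_sol F x \<and> x 0 = x0"
proof -
  define R0 where "R0 = max R (norm x0)"
  define R' where "R' = R0 + 1"
  define C where "C = cball (0::'a) R'"
  have C: "convex C" "closed C" "C \<noteq> {}" proof -
    have "0 \<le> R'" unfolding R'_def R0_def using norm_ge_zero[of x0] by linarith
    then show "convex C" "closed C" "C \<noteq> {}" by (auto simp: C_def)
  qed
  obtain L where L: "L-lipschitz_on C F" using loc_lip_compact[OF loc compact_cball[of 0 R']] unfolding C_def by blast
  define FR where "FR z = F (closest_point C z)" for z
  have "L-lipschitz_on UNIV FR"
  proof (rule lipschitz_onI)
    fix a b :: 'a
    have "dist (FR a) (FR b) \<le> L * dist (closest_point C a) (closest_point C b)"
      unfolding FR_def by (rule lipschitz_onD[OF L]) (use C closest_point_in_set in auto)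
    also have "\<dots> \<le> L * dist a b"
      by (rule mult_left_mono[OF closest_point_lipschitz[OF C]]) (rule lipschitz_on_nonneg[OF L])
    finally show "dist (FR a) (FR b) \<le> L * dist a b" .
  qed (rule lipschitz_on_nonneg[OF L])
  then obtain x where xs: "ode_sol FR x" and x0: "x 0 = x0" using lip_exists by blast
  have FR_eq: "FR z = F z" if "norm z \<le> R'" for z
    using that by (simp add: FR_def C_def closest_point_self)
  have bound: "norm (x t) \<le> R0" if t1: "0 \<le> t1" and "t = t1" for t t1
  proof (rule ccontr)
    assume "\<not> norm (x t) \<le> R0"
    then have big: "norm (x t1) > R0" using that by simp
    define \<rho> where "\<rho> = min (norm (x t1)) R'"
    have rho: "R0 < \<rho>" "\<rho> \<le> R'" using big by (auto simp: \<rho>_def R'_def)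
    define A where "A = {s \<in> {0..t1}. \<rho> \<le> norm (x s)}"
    have cx: "continuous_on {0..t1} x" using sol_on_cont[OF ode_sol_sol_on[OF xs]] .
    have Acl: "closed A" unfolding A_def
      by (rule continuous_on_closed_Collect_le) (auto intro!: continuous_intros cx)
    have Ane: "A \<noteq> {}" using t1 by (auto simp: A_def \<rho>_def)
    have Abdd: "bdd_below A" by (auto simp: A_def bdd_below_def)
    define T where "T = Inf A"
    have TA: "T \<in> A" using closed_contains_Inf[OF Ane Abdd Acl] by (simp add: T_def)
    then have T0: "0 \<le> T" and Tt1: "T \<le> t1" and xT: "\<rho> \<le> norm (x T)" by (auto simp: A_def)
    have "T \<noteq> 0" using xT x0 rho by (auto simp: R0_def)
    with T0 have Tpos: "0 < T" by simp
    have lessT: "norm (x s) < \<rho>" if "0 \<le> s" "s < T" for s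
    proof (rule ccontr)
      assume "\<not> norm (x s) < \<rho>"
      then have "s \<in> A" using that Tt1 by (auto simp: A_def)
      then have "T \<le> s" unfolding T_def using Abdd by (rule cInf_lower)
      with that show False by simp
    qed
    have leR: "norm (x s) \<le> R" if s: "0 \<le> s" "s < T" for s
    proof -
      have "sol_on F s x"
        unfolding sol_on_def
      proof
        fix t assume t: "t \<in> {0..s}"
        have "(x has_vector_derivative FR (x t)) (at t within {0..s})"
          using xs t unfolding ode_sol_def by (auto intro: has_vector_derivative_within_subset)
        moreover have "FR (x t) = F (x t)"
          using lessT[of t] t s rho by (intro FR_eq) auto
        ultimately show "(x has_vector_derivative F (x t)) (at t within {0..s})" by simp
      qed
      then show ?thesis using apriori[of s x] x0 s by auto
    qed
    have "closed {s \<in> {0..T}. norm (x s) \<le> R}"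
      by (rule continuous_on_closed_Collect_le)
        (auto intro!: continuous_intros continuous_on_subset[OF cx] intro: order.trans[OF _ Tt1])
    moreover have "{0..<T} \<subseteq> {s \<in> {0..T}. norm (x s) \<le> R}" using leR by auto
    ultimately have "closure {0..<T} \<subseteq> {s \<in> {0..T}. norm (x s) \<le> R}"
      by (rule closure_minimal[rotated])
    then have "norm (x T) \<le> R" using Tpos by (auto simp: subset_iff)
    then show False using xT rho by (simp add: R0_def)
  qed
  have "ode_sol F x"
    unfolding ode_sol_def
  proof (intro allI impI)
    fix t :: real assume t: "0 \<le> t"
    have "FR (x t) = F (x t)" using bound[OF t refl] by (intro FR_eq) (simp add: R'_def)
    then show "(x has_vector_derivative F (x t)) (at t within {0..})"
      using xs t unfolding ode_sol_def by metis
  qed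
  with x0 show ?thesis by blast
qed


lemma quad_upper: "\<exists>p>0. \<forall>u v. \<bar>u \<bullet> ((P::real^'n^'n) *v v)\<bar> \<le> p * norm u * norm v"
proof -
  obtain B where B: "B > 0" "\<And>v. norm (P *v v) \<le> B * norm v" using mat_bound[of P] by blast
  have "\<bar>u \<bullet> (P *v v)\<bar> \<le> B * norm u * norm v" for u v
  proof -
    have "\<bar>u \<bullet> (P *v v)\<bar> \<le> norm u * norm (P *v v)" by (rule Cauchy_Schwarz_ineq2)
    also have "\<dots> \<le> norm u * (B * norm v)" using B(2) by (simp add: mult_left_mono)
    finally show ?thesis by (simp add: algebra_simps)
  qed
  with B show ?thesis by blast
qed

lemma mvt_mono:
  fixes G :: "real^'n \<Rightarrow> real^'n" and D :: "real^'n \<Rightarrow> real^'n^'n"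
  assumes dG: "\<And>z. (G has_derivative (\<lambda>h. D z *v h)) (at z)"
    and neg: "\<And>z v. v \<bullet> (P *v (D z *v v)) \<le> - k * (norm v)^2"
  shows "(b - b') \<bullet> (P *v (G b - G b')) \<le> - k * (norm (b - b'))^2"
proof -
  define d where "d = b - b'"
  define \<phi> where "\<phi> s = d \<bullet> (P *v G (b' + s *\<^sub>R d))" for s :: real
  have lin: "bounded_linear (\<lambda>v. d \<bullet> (P *v (v::real^'n)))"
    by (intro bounded_linear_compose[OF bounded_linear_inner_right] matrix_vector_mul_bounded_linear)
  have der: "DERIV \<phi> s :> d \<bullet> (P *v (D (b' + s *\<^sub>R d) *v d))" for s
  proof -
    have 1: "((\<lambda>s. b' + s *\<^sub>R d) has_derivative (\<lambda>h. h *\<^sub>R d)) (at s)"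
      by (auto intro!: derivative_eq_intros)
    have A: "((G \<circ> (\<lambda>s. b' + s *\<^sub>R d)) has_derivative ((\<lambda>h. D (b' + s *\<^sub>R d) *v h) \<circ> (\<lambda>h. h *\<^sub>R d))) (at s)"
      by (rule diff_chain_at[OF 1 dG])
    have 2: "(((\<lambda>v. d \<bullet> (P *v v)) \<circ> (G \<circ> (\<lambda>s. b' + s *\<^sub>R d))) has_derivative
        ((\<lambda>v. d \<bullet> (P *v v)) \<circ> ((\<lambda>h. D (b' + s *\<^sub>R d) *v h) \<circ> (\<lambda>h. h *\<^sub>R d)))) (at s)"
      by (rule diff_chain_at[OF A bounded_linear.has_derivative[OF lin has_derivative_ident]])
    have e: "\<phi> = (\<lambda>v. d \<bullet> (P *v v)) \<circ> (G \<circ> (\<lambda>s. b' + s *\<^sub>R d))"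
      by (auto simp: \<phi>_def fun_eq_iff)
    show ?thesis
      unfolding has_field_derivative_def e
      apply (rule has_derivative_eq_rhs[OF 2])
      by (auto simp: fun_eq_iff \<phi>_def o_def matrix_vector_mult_scaleR)
  qed
  obtain z where "\<phi> 1 - \<phi> 0 = (1 - 0) * (d \<bullet> (P *v (D (b' + z *\<^sub>R d) *v d)))"
    using MVT2[of 0 1 \<phi>, OF _ der] by auto
  moreover have "\<phi> 1 - \<phi> 0 = d \<bullet> (P *v (G b - G b'))"
    by (simp add: \<phi>_def d_def matrix_vector_mult_diff_distrib inner_diff_right)
  ultimately show ?thesis using neg[where z="b' + z *\<^sub>R d" and v=d] by (simp add: d_def)
qed

lemma sqrt_bound:
  assumes "a\<^sup>2 \<le> G * exp (- c * t) * n\<^sup>2" "0 \<le> G" "0 \<le> a" "0 \<le> n"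
  shows "a \<le> sqrt G * exp (- (c/2) * t) * n"
proof -
  have "(sqrt G * exp (- (c/2) * t) * n)\<^sup>2 = G * exp (- c * t) * n\<^sup>2"
    using assms(2) by (simp add: power_mult_distrib flip: exp_of_nat_mult)
  then have "a\<^sup>2 \<le> (sqrt G * exp (- (c/2) * t) * n)\<^sup>2" using assms(1) by simp
  moreover have "0 \<le> sqrt G * exp (- (c/2) * t) * n" using assms by simp
  ultimately show ?thesis by (rule power2_le_imp_le)
qed

lemma ges_quad:
  fixes F :: "real^'n \<Rightarrow> real^'n"
  assumes lip: "L-lipschitz_on UNIV F"
    and eq: "F xe = 0"
    and P: "sym_pos_def P"
    and q: "q > 0"
    and mono: "\<And>z. (z - xe) \<bullet> (P *v F z) \<le> - q * (norm (z - xe))^2"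
  shows "GES F xe"
proof -
  have Ps: "transpose P = P" using P by (simp add: sym_pos_def_def)
  obtain m where m: "m > 0" "\<And>v. m * (norm v)^2 \<le> v \<bullet> (P *v v)" using posdef_lower[OF P] by blast
  obtain p where p: "p > 0" "\<And>u v. \<bar>u \<bullet> (P *v v)\<bar> \<le> p * norm u * norm v"
    using quad_upper[of P] by metis
  have pu: "v \<bullet> (P *v v) \<le> p * (norm v)^2" for v
    using p(2)[of v v] by (simp add: power2_eq_square)
  define c where "c = 2 * q / p"
  have c: "c > 0" using q p by (simp add: c_def)
  define M where "M = sqrt (p / m)"
  have est: "norm (x t - xe) \<le> M * exp (- (c/2) * t) * norm (x 0 - xe)"
    if xs: "ode_sol F x" and t: "0 \<le> t" for x t
  proof -
    define V where "V s = (x s - xe) \<bullet> (P *v (x s - xe))" for s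
    have so: "sol_on F t x" using ode_sol_sol_on[OF xs] .
    have dV: "(V has_real_derivative 2 * ((x s - xe) \<bullet> (P *v F (x s)))) (at s within {0..t})"
      if "s \<in> {0..t}" for s
      unfolding V_def by (rule lyap_deriv[OF Ps]) (use so that in \<open>auto simp: sol_on_def\<close>)
    have "2 * ((x s - xe) \<bullet> (P *v F (x s))) \<le> - c * V s" for s
    proof -
      have "2 * ((x s - xe) \<bullet> (P *v F (x s))) \<le> - 2 * q * (norm (x s - xe))^2"
        using mono[of "x s"] by simp
      moreover have "c * V s \<le> 2 * q * (norm (x s - xe))^2"
      proof -
        have "c * V s \<le> c * (p * (norm (x s - xe))^2)"
          using pu[of "x s - xe"] c by (simp add: V_def mult_left_mono)
        also have "\<dots> = 2 * q * (norm (x s - xe))^2" using p by (simp add: c_def)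
        finally show ?thesis .
      qed
      ultimately show ?thesis by simp
    qed
    then have a1: "V t \<le> V 0 * exp (- c * t)"
      using decay_lemma[OF t dV] t by auto
    have a2: "m * (norm (x t - xe))^2 \<le> V t" using m(2) by (simp add: V_def)
    have a3: "V 0 \<le> p * (norm (x 0 - xe))^2" using pu by (simp add: V_def)
    have "V 0 * exp (- c * t) \<le> p * (norm (x 0 - xe))^2 * exp (- c * t)"
      using a3 by (rule mult_right_mono) simp
    then have "m * (norm (x t - xe))^2 \<le> p * (norm (x 0 - xe))^2 * exp (- c * t)"
      using a1 a2 by linarith
    then have "(norm (x t - xe))^2 \<le> (p / m) * exp (- c * t) * (norm (x 0 - xe))^2"
      using m(1) by (simp add: field_simps)
    then show ?thesis unfolding M_def
      by (rule sqrt_bound) (use p m in auto)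
  qed
  have "\<exists>x. ode_sol F x \<and> x 0 = x0" for x0 using lip_exists[OF lip] .
  moreover have "M > 0" using p m by (simp add: M_def)
  ultimately show ?thesis
    unfolding GES_def using eq c est
    by (intro conjI allI exI[of _ M] exI[of _ "c/2"]) auto
qed


theorem proposition3:
  fixes f1 :: "real^'n1 \<Rightarrow> real^'n2 \<Rightarrow> real^'n1"
    and f2 :: "real^'n1 \<Rightarrow> real^'n2 \<Rightarrow> real^'n2"
    and J11 :: "real^'n1 \<Rightarrow> real^'n2 \<Rightarrow> real^'n1^'n1"
    and J12 :: "real^'n1 \<Rightarrow> real^'n2 \<Rightarrow> real^'n2^'n1"
    and J21 :: "real^'n1 \<Rightarrow> real^'n2 \<Rightarrow> real^'n1^'n2"
    and J22 :: "real^'n1 \<Rightarrow> real^'n2 \<Rightarrow> real^'n2^'n2"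
    and S :: "real^'n1 \<Rightarrow> real^'n2 \<Rightarrow> real^'n1^'n2"
    and x2s :: "real^'n1 \<Rightarrow> real^'n2"
    and Dx2s :: "real^'n1 \<Rightarrow> real^'n1^'n2"
    and x1s :: "real^'n1"
    and P1 Q1 :: "real^'n1^'n1"
    and P2 Q2 :: "real^'n2^'n2"
  assumes f1_deriv: "\<And>a b. ((\<lambda>z. f1 (fst z) (snd z)) has_derivative
              (\<lambda>h. J11 a b *v fst h + J12 a b *v snd h)) (at (a, b))"
    and f2_deriv: "\<And>a b. ((\<lambda>z. f2 (fst z) (snd z)) has_derivative
              (\<lambda>h. J21 a b *v fst h + J22 a b *v snd h)) (at (a, b))"
    and J_cont: "continuous_on UNIV (\<lambda>z. J11 (fst z) (snd z))"
       "continuous_on UNIV (\<lambda>z. J12 (fst z) (snd z))"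
       "continuous_on UNIV (\<lambda>z. J21 (fst z) (snd z))"
       "continuous_on UNIV (\<lambda>z. J22 (fst z) (snd z))"
    and J22_inv: "\<And>a b. invertible (J22 a b)"
    and S_def: "\<And>a b. S a b = - (matrix_inv (J22 a b) ** J21 a b)"
    and ps_loc_lip: "\<forall>z. \<exists>e>0. \<exists>L. L-lipschitz_on (ball z e)
          (\<lambda>w. (f1 (fst w) (snd w), f2 (fst w) (snd w) + S (fst w) (snd w) *v f1 (fst w) (snd w)))"
    and x2s_deriv: "\<And>a. (x2s has_derivative (\<lambda>h. Dx2s a *v h)) (at a)"
    and x2s_cont: "continuous_on UNIV Dx2s"
    and x2s_ss: "\<And>a. f2 a (x2s a) = 0"
    and steady: "f1 x1s (x2s x1s) = 0"
    and f1_lip: "\<exists>L. L-lipschitz_on UNIV (\<lambda>z. f1 (fst z) (snd z))"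
    and f2_lip: "\<exists>L. L-lipschitz_on UNIV (\<lambda>z. f2 (fst z) (snd z))"
    and P1: "sym_pos_def P1" and Q1: "sym_pos_def Q1"
    and P2: "sym_pos_def P2" and Q2: "sym_pos_def Q2"
    and LMI1: "\<And>a. mat_le
        (P1 ** (J11 a (x2s a) + J12 a (x2s a) ** Dx2s a)
         + transpose (J11 a (x2s a) + J12 a (x2s a) ** Dx2s a) ** P1) (- Q1)"
    and LMI2: "\<And>a b. mat_le (P2 ** J22 a b + transpose (J22 a b) ** P2) (- Q2)"
  shows "GES (\<lambda>w. (f1 (fst w) (snd w), f2 (fst w) (snd w) + S (fst w) (snd w) *v f1 (fst w) (snd w)))
             (x1s, x2s x1s)
       \<and> GES (\<lambda>a. f1 a (x2s a)) x1s
       \<and> (\<forall>a. GES (\<lambda>b. f2 a b) (x2s a))"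
proof -
  have P1s: "transpose P1 = P1" using P1 by (simp add: sym_pos_def_def)
  have P2s: "transpose P2 = P2" using P2 by (simp add: sym_pos_def_def)
  obtain q1 where q1: "q1 > 0" "\<And>v. q1 * (norm v)^2 \<le> v \<bullet> (Q1 *v v)" using posdef_lower[OF Q1] by blast
  obtain q2 where q2: "q2 > 0" "\<And>v. q2 * (norm v)^2 \<le> v \<bullet> (Q2 *v v)" using posdef_lower[OF Q2] by blast
  obtain m1 where m1: "m1 > 0" "\<And>v. m1 * (norm v)^2 \<le> v \<bullet> (P1 *v v)" using posdef_lower[OF P1] by blast
  obtain m2 where m2: "m2 > 0" "\<And>v. m2 * (norm v)^2 \<le> v \<bullet> (P2 *v v)" using posdef_lower[OF P2] by blast
  obtain p1 where p1: "p1 > 0" "\<And>u v. \<bar>u \<bullet> (P1 *v v)\<bar> \<le> p1 * norm u * norm v" using quad_upper[of P1] by metis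
  obtain p2 where p2: "p2 > 0" "\<And>u v. \<bar>u \<bullet> (P2 *v v)\<bar> \<le> p2 * norm u * norm v" using quad_upper[of P2] by metis
  obtain L1 where L1: "L1-lipschitz_on UNIV (\<lambda>z. f1 (fst z) (snd z))" using f1_lip by blast
  obtain L2 where L2: "L2-lipschitz_on UNIV (\<lambda>z. f2 (fst z) (snd z))" using f2_lip by blast
  have L1p: "0 \<le> L1" using lipschitz_on_nonneg[OF L1] .
  have L2p: "0 \<le> L2" using lipschitz_on_nonneg[OF L2] .
  have L1n: "norm (f1 a b - f1 a' b') \<le> L1 * norm (a - a', b - b')" for a b a' b'
    using lipschitz_on_normD[OF L1, of "(a,b)" "(a',b')"] by simp
  have L2n: "norm (f2 a b - f2 a' b') \<le> L2 * norm (a - a', b - b')" for a b a' b'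
    using lipschitz_on_normD[OF L2, of "(a,b)" "(a',b')"] by simp
  have K2: "v \<bullet> (P2 *v (J22 a b *v v)) \<le> - (q2/2) * (norm v)^2" for a b v
    using lmi_quad[OF LMI2[of a b] P2s, of v] q2(2)[of v] by linarith
  define J1r where "J1r a = J11 a (x2s a) + J12 a (x2s a) ** Dx2s a" for a
  have K1: "v \<bullet> (P1 *v (J1r a *v v)) \<le> - (q1/2) * (norm v)^2" for a v
    using lmi_quad[OF LMI1[of a] P1s, of v] q1(2)[of v] unfolding J1r_def by linarith
  have d2: "((f2 a) has_derivative (\<lambda>h. J22 a z *v h)) (at z)" for a z
  proof -
    have "(((\<lambda>z. f2 (fst z) (snd z)) \<circ> (\<lambda>b. (a, b))) has_derivative
        ((\<lambda>h. J21 a z *v fst h + J22 a z *v snd h) \<circ> (\<lambda>h. (0, h)))) (at z)"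
      by (rule diff_chain_at) (auto intro!: derivative_eq_intros f2_deriv)
    then show ?thesis by (simp add: o_def)
  qed
  have M2: "(b - b') \<bullet> (P2 *v (f2 a b - f2 a b')) \<le> - (q2/2) * (norm (b - b'))^2" for a b b'
    by (rule mvt_mono[OF d2 K2])
  define c2 where "c2 = 2 * p2 / q2"
  have c2p: "c2 > 0" using p2 q2 by (simp add: c2_def)
  have c2b: "norm (b - b') \<le> c2 * norm (f2 a b - f2 a b')" for a b b'
  proof (cases "b = b'")
    case True then show ?thesis by simp
  next
    case False
    have "(q2/2) * (norm (b - b'))^2 \<le> - ((b - b') \<bullet> (P2 *v (f2 a b - f2 a b')))" using M2[of b b' a] by simp
    also have "\<dots> \<le> p2 * norm (b - b') * norm (f2 a b - f2 a b')" using p2(2)[of "b - b'" "f2 a b - f2 a b'"] by simp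
    finally have "(q2/2) * norm (b - b') * norm (b - b') \<le> p2 * norm (f2 a b - f2 a b') * norm (b - b')"
      by (simp add: power2_eq_square algebra_simps)
    then have "(q2/2) * norm (b - b') \<le> p2 * norm (f2 a b - f2 a b')"
      using False by simp
    then show ?thesis using q2 by (simp add: c2_def field_simps)
  qed
  define Lx where "Lx = c2 * L2"
  have Lxp: "0 \<le> Lx" using c2p L2p by (simp add: Lx_def)
  have x2s_lip: "norm (x2s a - x2s a') \<le> Lx * norm (a - a')" for a a'
  proof -
    have "norm (x2s a - x2s a') \<le> c2 * norm (f2 a' (x2s a) - f2 a' (x2s a'))" by (rule c2b)
    also have "f2 a' (x2s a) - f2 a' (x2s a') = f2 a' (x2s a) - f2 a (x2s a)" using x2s_ss by simp
    also have "norm \<dots> \<le> L2 * norm (a' - a, x2s a - x2s a)" by (rule L2n)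
    also have "\<dots> = L2 * norm (a - a')" by (simp add: norm_minus_commute)
    finally show ?thesis using c2p by (simp add: Lx_def mult_left_mono algebra_simps)
  qed
  have dr: "((\<lambda>a. f1 a (x2s a)) has_derivative (\<lambda>h. J1r a *v h)) (at a)" for a
  proof -
    have "(((\<lambda>z. f1 (fst z) (snd z)) \<circ> (\<lambda>a. (a, x2s a))) has_derivative
        ((\<lambda>h. J11 a (x2s a) *v fst h + J12 a (x2s a) *v snd h) \<circ> (\<lambda>h. (h, Dx2s a *v h)))) (at a)"
      by (rule diff_chain_at) (auto intro!: derivative_eq_intros f1_deriv x2s_deriv)
    then show ?thesis
      by (simp add: o_def J1r_def matrix_vector_mult_add_rdistrib matrix_vector_mul_assoc)
  qed
  have M1: "(a - x1s) \<bullet> (P1 *v f1 a (x2s a)) \<le> - (q1/2) * (norm (a - x1s))^2" for a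
    using mvt_mono[OF dr K1, of a x1s] steady by simp
  have GES_red: "GES (\<lambda>a. f1 a (x2s a)) x1s"
  proof (rule ges_quad[OF _ steady P1 _ M1])
    show "(L1 * (1 + Lx))-lipschitz_on UNIV (\<lambda>a. f1 a (x2s a))"
    proof (rule lipschitz_onI)
      fix a a' :: "real^'n1"
      have 1: "dist (f1 a (x2s a)) (f1 a' (x2s a')) \<le> L1 * norm (a - a', x2s a - x2s a')"
        using L1n by (simp add: dist_norm)
      have "norm (a - a', x2s a - x2s a') \<le> norm (a - a') + Lx * norm (a - a')"
        using norm_Pair_le[of "a - a'" "x2s a - x2s a'"] x2s_lip[of a a'] by simp
      then have "L1 * norm (a - a', x2s a - x2s a') \<le> L1 * (norm (a - a') + Lx * norm (a - a'))"
        using L1p by (rule mult_left_mono)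
      with 1 show "dist (f1 a (x2s a)) (f1 a' (x2s a')) \<le> L1 * (1 + Lx) * dist a a'"
        by (simp add: dist_norm algebra_simps)
    qed (use L1p Lxp in simp)
  qed (use q1 in simp)
  have GES_fast: "GES (\<lambda>b. f2 a b) (x2s a)" for a
  proof (rule ges_quad[where F="f2 a" and xe="x2s a" and P=P2 and q="q2/2" and L=L2])
    show "f2 a (x2s a) = 0" by (rule x2s_ss)
    show "sym_pos_def P2" by (rule P2)
    show "L2-lipschitz_on UNIV (f2 a)"
    proof (rule lipschitz_onI)
      fix b b' :: "real^'n2"
      show "dist (f2 a b) (f2 a b') \<le> L2 * dist b b'"
        using L2n[of a b a b'] by (simp add: dist_norm)
    qed (rule L2p)
    show "(z - x2s a) \<bullet> (P2 *v f2 a z) \<le> - (q2/2) * (norm (z - x2s a))^2" for z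
      using M2[of z "x2s a" a] x2s_ss by simp
  qed (use q2 in simp)
  have GES_ps: "GES (\<lambda>w. (f1 (fst w) (snd w), f2 (fst w) (snd w) + S (fst w) (snd w) *v f1 (fst w) (snd w)))
             (x1s, x2s x1s)"
  proof -
    define Fps where "Fps = (\<lambda>w. (f1 (fst w) (snd w), f2 (fst w) (snd w) + S (fst w) (snd w) *v f1 (fst w) (snd w)))"
    define we where "we = (x1s, x2s x1s)"
    have Fwe: "Fps we = 0" using steady x2s_ss[of x1s] by (simp add: Fps_def we_def zero_prod_def)
    have JS: "J22 a b ** S a b = - J21 a b" for a b
    proof -
      have "J22 a b ** matrix_inv (J22 a b) = mat 1"
        using J22_inv[of a b] unfolding invertible_def matrix_inv_def by (rule someI_ex[THEN conjunct1])
      moreover have "A ** (- B) = - (A ** B)" for A :: "real^'n2^'n2" and B :: "real^'n1^'n2"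
        by (simp add: matrix_matrix_mult_def vec_eq_iff sum_negf)
      ultimately show ?thesis by (simp add: S_def matrix_mul_assoc)
    qed
    define \<beta> where "\<beta> = 2 * p1 * L1 * c2"
    have \<beta>: "0 \<le> \<beta>" using p1 L1p c2p by (simp add: \<beta>_def)
    define \<kappa> where "\<kappa> = (\<beta>^2 / q1 + 1) / q2"
    have \<kappa>: "\<kappa> > 0" proof -
      have "0 \<le> \<beta>^2 / q1" using q1(1) by simp
      then have "0 < \<beta>^2 / q1 + 1" by linarith
      then show ?thesis using q2(1) by (simp add: \<kappa>_def)
    qed
    have \<kappa>q: "\<kappa> * q2 = \<beta>^2 / q1 + 1" using q2 by (simp add: \<kappa>_def)
    define c where "c = min (q1 / (2 * p1)) (q2 / (2 * p2))"
    have c: "c > 0" using q1 q2 p1 p2 by (simp add: c_def)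
    define A where "A = p1 + \<kappa> * p2 * L2^2"
    have A: "A > 0" using p1 p2 \<kappa> by (simp add: A_def add_pos_nonneg)
    define G1 where "G1 = 2 * (1 + Lx)^2 / m1 + 2 * c2^2 / (\<kappa> * m2)"
    have G1: "G1 > 0" proof -
      have "0 \<le> 2 * (1 + Lx)^2 / m1" using m1(1) by simp
      moreover have "0 < 2 * c2^2 / (\<kappa> * m2)" using m2(1) \<kappa> c2p by simp
      ultimately show ?thesis unfolding G1_def by linarith
    qed
    define M where "M = sqrt (G1 * A)"
    have M: "M > 0" using G1 A by (simp add: M_def)
    have est: "norm (w t - we) \<le> M * exp (- (c/2) * t) * norm (w 0 - we)"
      if T: "0 \<le> T" and sol: "sol_on Fps T w" and t: "t \<in> {0..T}" for T w t
    proof -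
      define V where "V a b = (a - x1s) \<bullet> (P1 *v (a - x1s)) + \<kappa> * ((f2 a b - 0) \<bullet> (P2 *v (f2 a b - 0)))" for a b
      define V' where "V' a b = 2 * ((a - x1s) \<bullet> (P1 *v f1 a b)) + \<kappa> * (2 * ((f2 a b - 0) \<bullet> (P2 *v (J22 a b *v f2 a b))))" for a b
      have Ubound: "V' a b \<le> - c * V a b" for a b
      proof -
        define z where "z = a - x1s"
        define yy where "yy = f2 a b"
        define Z where "Z = norm z"
        define Y where "Y = norm yy"
        have Z0: "0 \<le> Z" "0 \<le> Y" by (simp_all add: Z_def Y_def)
        have i: "z \<bullet> (P1 *v f1 a b) = z \<bullet> (P1 *v f1 a (x2s a)) + z \<bullet> (P1 *v (f1 a b - f1 a (x2s a)))"
          by (simp add: matrix_vector_mult_diff_distrib inner_diff_right)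
        have ii: "z \<bullet> (P1 *v f1 a (x2s a)) \<le> - (q1/2) * Z^2"
          using M1[of a] by (simp add: z_def Z_def)
        have e: "norm (b - x2s a) \<le> c2 * Y"
          using c2b[of b "x2s a" a] x2s_ss[of a] by (simp add: Y_def yy_def)
        have D: "norm (f1 a b - f1 a (x2s a)) \<le> L1 * norm (b - x2s a)"
          using L1n[of a b a "x2s a"] by simp
        have D2: "norm (f1 a b - f1 a (x2s a)) \<le> L1 * (c2 * Y)"
          using D mult_left_mono[OF e L1p] by linarith
        have iii: "z \<bullet> (P1 *v (f1 a b - f1 a (x2s a))) \<le> (\<beta>/2) * (Z * Y)"
        proof -
          have "z \<bullet> (P1 *v (f1 a b - f1 a (x2s a))) \<le> p1 * Z * norm (f1 a b - f1 a (x2s a))"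
            using p1(2)[of z "f1 a b - f1 a (x2s a)"] by (simp add: Z_def)
          also have "\<dots> \<le> p1 * Z * (L1 * (c2 * Y))"
            by (rule mult_left_mono[OF D2]) (use p1 Z0 in simp)
          also have "\<dots> = (\<beta>/2) * (Z * Y)" by (simp add: \<beta>_def)
          finally show ?thesis .
        qed
        have iv: "yy \<bullet> (P2 *v (J22 a b *v yy)) \<le> - (q2/2) * Y^2"
          using K2[of yy a b] by (simp add: Y_def)
        have iv': "\<kappa> * (yy \<bullet> (P2 *v (J22 a b *v yy))) \<le> \<kappa> * (- (q2/2) * Y^2)"
          using mult_left_mono[OF iv] \<kappa> by simp
        have v: "\<beta> * (Z * Y) \<le> (q1/2) * Z^2 + (\<beta>^2 / (2 * q1)) * Y^2"
        proof -
          have "0 \<le> (q1 * Z - \<beta> * Y)^2" by simp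
          then have "2 * q1 * (\<beta> * (Z * Y)) \<le> q1^2 * Z^2 + \<beta>^2 * Y^2"
            by (simp add: power2_eq_square algebra_simps)
          then have "(2 * q1 * (\<beta> * (Z * Y))) / (2 * q1) \<le> (q1^2 * Z^2 + \<beta>^2 * Y^2) / (2 * q1)"
            using q1 by (intro divide_right_mono) auto
          moreover have "(2 * q1 * (\<beta> * (Z * Y))) / (2 * q1) = \<beta> * (Z * Y)" using q1 by simp
          moreover have "(q1^2 * Z^2 + \<beta>^2 * Y^2) / (2 * q1) = (q1/2) * Z^2 + (\<beta>^2 / (2 * q1)) * Y^2"
            using q1 by (simp add: field_simps power2_eq_square)
          ultimately show ?thesis by simp
        qed
        have Vp1: "z \<bullet> (P1 *v z) \<le> p1 * Z^2" using p1(2)[of z z] by (simp add: Z_def power2_eq_square)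
        have Vp2: "yy \<bullet> (P2 *v yy) \<le> p2 * Y^2" using p2(2)[of yy yy] by (simp add: Y_def power2_eq_square)
        have cp1: "c * p1 \<le> q1 / 2"
        proof -
          have "c \<le> q1 / (2 * p1)" by (simp add: c_def)
          then have "c * p1 \<le> q1 / (2 * p1) * p1" using p1(1) by (intro mult_right_mono) auto
          then show ?thesis using p1(1) by simp
        qed
        have cp2: "c * p2 \<le> q2 / 2"
        proof -
          have "c \<le> q2 / (2 * p2)" by (simp add: c_def)
          then have "c * p2 \<le> q2 / (2 * p2) * p2" using p2(1) by (intro mult_right_mono) auto
          then show ?thesis using p2(1) by simp
        qed
        have cV1: "c * (z \<bullet> (P1 *v z)) \<le> (q1/2) * Z^2"
        proof -
          have "c * (z \<bullet> (P1 *v z)) \<le> c * (p1 * Z^2)" using mult_left_mono[OF Vp1] c by simp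
          also have "\<dots> = (c * p1) * Z^2" by simp
          also have "\<dots> \<le> (q1/2) * Z^2" using cp1 by (rule mult_right_mono) simp
          finally show ?thesis .
        qed
        have cV2: "c * (\<kappa> * (yy \<bullet> (P2 *v yy))) \<le> (\<kappa> * q2 / 2) * Y^2"
        proof -
          have "c * (\<kappa> * (yy \<bullet> (P2 *v yy))) = \<kappa> * (c * (yy \<bullet> (P2 *v yy)))" by simp
          also have "\<dots> \<le> \<kappa> * (c * (p2 * Y^2))" using mult_left_mono[OF Vp2] c \<kappa> by (simp add: mult_left_mono)
          also have "\<dots> = \<kappa> * ((c * p2) * Y^2)" by simp
          also have "\<dots> \<le> \<kappa> * ((q2/2) * Y^2)"
            using mult_right_mono[OF cp2, of "Y^2"] \<kappa> by (simp add: mult_left_mono)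
          finally show ?thesis by simp
        qed
        have "V' a b = 2 * (z \<bullet> (P1 *v f1 a (x2s a))) + 2 * (z \<bullet> (P1 *v (f1 a b - f1 a (x2s a))))
            + 2 * (\<kappa> * (yy \<bullet> (P2 *v (J22 a b *v yy))))"
          by (simp add: V'_def i z_def yy_def algebra_simps)
        also have "\<dots> \<le> 2 * (- (q1/2) * Z^2) + 2 * ((\<beta>/2) * (Z * Y)) + 2 * (\<kappa> * (- (q2/2) * Y^2))"
          using ii iii iv' by linarith
        also have "\<dots> = - q1 * Z^2 + \<beta> * (Z * Y) - (\<kappa> * q2) * Y^2" by (simp add: algebra_simps)
        also have "\<dots> \<le> - q1 * Z^2 + ((q1/2) * Z^2 + (\<beta>^2 / (2 * q1)) * Y^2) - (\<beta>^2 / q1 + 1) * Y^2"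
          using v \<kappa>q by simp
        also have "\<dots> = - ((q1/2) * Z^2) - (\<beta>^2 / (2 * q1) + 1) * Y^2"
          using q1 by (simp add: field_simps)
        also have "\<dots> \<le> - ((q1/2) * Z^2) - (\<kappa> * q2 / 2) * Y^2"
        proof -
          have "\<kappa> * q2 / 2 \<le> \<beta>^2 / (2 * q1) + 1" using \<kappa>q q1 by (simp add: field_simps)
          then have "(\<kappa> * q2 / 2) * Y^2 \<le> (\<beta>^2 / (2 * q1) + 1) * Y^2" by (rule mult_right_mono) simp
          then show ?thesis by simp
        qed
        also have "\<dots> \<le> - (c * (z \<bullet> (P1 *v z)) + c * (\<kappa> * (yy \<bullet> (P2 *v yy))))"
          using cV1 cV2 by simp
        also have "\<dots> = - c * V a b" by (simp add: V_def z_def yy_def algebra_simps)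
        finally show ?thesis .
      qed
      define x1 where "x1 s = fst (w s)" for s
      define x2 where "x2 s = snd (w s)" for s
      have dw: "(w has_vector_derivative Fps (w s)) (at s within {0..T})" if "s \<in> {0..T}" for s
        using sol that by (simp add: sol_on_def)
      have dx1: "(x1 has_vector_derivative f1 (x1 s) (x2 s)) (at s within {0..T})" if "s \<in> {0..T}" for s
      proof -
        have "x1 = (\<lambda>s. fst (w s))" by (simp add: fun_eq_iff x1_def)
        then show ?thesis
          using bounded_linear.has_vector_derivative[OF bounded_linear_fst dw[OF that]]
          by (simp add: Fps_def x1_def x2_def)
      qed
      have dy: "((\<lambda>s. f2 (x1 s) (x2 s)) has_vector_derivative J22 (x1 s) (x2 s) *v f2 (x1 s) (x2 s)) (at s within {0..T})"
        if "s \<in> {0..T}" for s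
      proof -
        have g: "((\<lambda>z. f2 (fst z) (snd z)) has_derivative (\<lambda>h. J21 (x1 s) (x2 s) *v fst h + J22 (x1 s) (x2 s) *v snd h)) (at (w s) within w ` {0..T})"
          using f2_deriv[of "x1 s" "x2 s"] by (simp add: x1_def x2_def has_derivative_at_withinI)
        have "(((\<lambda>z. f2 (fst z) (snd z)) \<circ> w) has_vector_derivative
            (J21 (x1 s) (x2 s) *v fst (Fps (w s)) + J22 (x1 s) (x2 s) *v snd (Fps (w s)))) (at s within {0..T})"
          by (rule vector_derivative_diff_chain_within[OF dw[OF that] g])
        moreover have "J21 (x1 s) (x2 s) *v fst (Fps (w s)) + J22 (x1 s) (x2 s) *v snd (Fps (w s))
            = J22 (x1 s) (x2 s) *v f2 (x1 s) (x2 s)"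
        proof -
          have "J22 (x1 s) (x2 s) *v (S (x1 s) (x2 s) *v f1 (x1 s) (x2 s)) = - (J21 (x1 s) (x2 s) *v f1 (x1 s) (x2 s))"
            using JS matrix_vector_mult_diff_rdistrib[of 0 "J21 (x1 s) (x2 s)"] by (simp add: matrix_vector_mul_assoc)
          then show ?thesis
            by (simp add: Fps_def x1_def x2_def matrix_vector_right_distrib)
        qed
        ultimately show ?thesis by (simp add: o_def x1_def x2_def)
      qed
      define U where "U s = V (x1 s) (x2 s)" for s
      have wd: "w s - we = (x1 s - x1s, x2 s - x2s x1s)" for s
        by (simp add: x1_def x2_def we_def prod_eq_iff)
      have dU: "(U has_real_derivative V' (x1 s) (x2 s)) (at s within {0..T})" if "s \<in> {0..T}" for s
      proof -
        have 1: "((\<lambda>s. (x1 s - x1s) \<bullet> (P1 *v (x1 s - x1s))) has_real_derivative 2 * ((x1 s - x1s) \<bullet> (P1 *v f1 (x1 s) (x2 s)))) (at s within {0..T})"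
          by (rule lyap_deriv[OF P1s dx1[OF that]])
        have 2: "((\<lambda>s. (f2 (x1 s) (x2 s) - 0) \<bullet> (P2 *v (f2 (x1 s) (x2 s) - 0))) has_real_derivative
            2 * ((f2 (x1 s) (x2 s) - 0) \<bullet> (P2 *v (J22 (x1 s) (x2 s) *v f2 (x1 s) (x2 s))))) (at s within {0..T})"
          by (rule lyap_deriv[OF P2s dy[OF that]])
        show ?thesis
          unfolding U_def V_def V'_def
          by (intro DERIV_add 1 DERIV_cmult 2)
      qed
      have Udec: "U t \<le> U 0 * exp (- c * t)"
        by (rule decay_lemma[OF T dU _ t]) (use Ubound in \<open>auto simp: U_def\<close>)
      have U0: "U 0 \<le> A * (norm (w 0 - we))^2"
      proof -
        define N where "N = norm (w 0 - we)"
        have z0: "norm (x1 0 - x1s) \<le> N"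
          using norm_fst_le[of "x1 0 - x1s" "x2 0 - x2s x1s"] by (simp add: N_def wd)
        have y0: "norm (f2 (x1 0) (x2 0)) \<le> L2 * N"
          using L2n[of "x1 0" "x2 0" x1s "x2s x1s"] x2s_ss[of x1s] by (simp add: N_def wd)
        have a1: "(x1 0 - x1s) \<bullet> (P1 *v (x1 0 - x1s)) \<le> p1 * N^2"
        proof -
          have "(x1 0 - x1s) \<bullet> (P1 *v (x1 0 - x1s)) \<le> p1 * (norm (x1 0 - x1s))^2"
            using p1(2)[of "x1 0 - x1s" "x1 0 - x1s"] by (simp add: power2_eq_square)
          also have "\<dots> \<le> p1 * N^2" using z0 p1 by (intro mult_left_mono power_mono) auto
          finally show ?thesis .
        qed
        have a2: "f2 (x1 0) (x2 0) \<bullet> (P2 *v f2 (x1 0) (x2 0)) \<le> p2 * (L2^2 * N^2)"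
        proof -
          have "f2 (x1 0) (x2 0) \<bullet> (P2 *v f2 (x1 0) (x2 0)) \<le> p2 * (norm (f2 (x1 0) (x2 0)))^2"
            using p2(2)[of "f2 (x1 0) (x2 0)" "f2 (x1 0) (x2 0)"] by (simp add: power2_eq_square)
          also have "\<dots> \<le> p2 * (L2 * N)^2" using y0 p2 by (intro mult_left_mono power_mono) auto
          finally show ?thesis by (simp add: power_mult_distrib)
        qed
        have "U 0 \<le> p1 * N^2 + \<kappa> * (p2 * (L2^2 * N^2))"
        proof -
          have "\<kappa> * (f2 (x1 0) (x2 0) \<bullet> (P2 *v f2 (x1 0) (x2 0))) \<le> \<kappa> * (p2 * (L2^2 * N^2))"
            using a2 \<kappa> by (intro mult_left_mono) auto
          then show ?thesis unfolding U_def V_def using a1 by simp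
        qed
        then show ?thesis by (simp add: A_def N_def algebra_simps)
      qed
      have Nt: "(norm (w t - we))^2 \<le> G1 * U t"
      proof -
        define Z where "Z = norm (x1 t - x1s)"
        define Y where "Y = norm (f2 (x1 t) (x2 t))"
        have "norm (w t - we) \<le> Z + norm (x2 t - x2s x1s)"
          using norm_Pair_le[of "x1 t - x1s" "x2 t - x2s x1s"] by (simp add: Z_def wd)
        also have "norm (x2 t - x2s x1s) \<le> norm (x2 t - x2s (x1 t)) + norm (x2s (x1 t) - x2s x1s)"
          using norm_triangle_ineq[of "x2 t - x2s (x1 t)" "x2s (x1 t) - x2s x1s"] by simp
        also have "norm (x2 t - x2s (x1 t)) \<le> c2 * Y"
          using c2b[of "x2 t" "x2s (x1 t)" "x1 t"] x2s_ss[of "x1 t"] by (simp add: Y_def)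
        also have "norm (x2s (x1 t) - x2s x1s) \<le> Lx * Z" using x2s_lip by (simp add: Z_def)
        finally have n: "norm (w t - we) \<le> (1 + Lx) * Z + c2 * Y" by (simp add: algebra_simps)
        have "(norm (w t - we))^2 \<le> ((1 + Lx) * Z + c2 * Y)^2"
          using n by (intro power_mono) auto
        also have "\<dots> \<le> 2 * (1 + Lx)^2 * Z^2 + 2 * c2^2 * Y^2"
        proof -
          have "0 \<le> ((1 + Lx) * Z - c2 * Y)^2" by simp
          then show ?thesis by (simp add: power2_eq_square algebra_simps)
        qed
        also have "\<dots> \<le> G1 * U t"
        proof -
          have v1: "m1 * Z^2 \<le> (x1 t - x1s) \<bullet> (P1 *v (x1 t - x1s))" using m1(2) by (simp add: Z_def)
          have v2: "m2 * Y^2 \<le> f2 (x1 t) (x2 t) \<bullet> (P2 *v f2 (x1 t) (x2 t))" using m2(2) by (simp add: Y_def)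
          have w1: "0 \<le> (x1 t - x1s) \<bullet> (P1 *v (x1 t - x1s))" using v1 m1(1) by (smt (verit) zero_le_power2 mult_nonneg_nonneg)
          have w2: "0 \<le> f2 (x1 t) (x2 t) \<bullet> (P2 *v f2 (x1 t) (x2 t))" using v2 m2(1) by (smt (verit) zero_le_power2 mult_nonneg_nonneg)
          have "2 * (1 + Lx)^2 * Z^2 = (2 * (1 + Lx)^2 / m1) * (m1 * Z^2)" using m1 by simp
          also have "\<dots> \<le> (2 * (1 + Lx)^2 / m1) * ((x1 t - x1s) \<bullet> (P1 *v (x1 t - x1s)))"
            using v1 m1 by (intro mult_left_mono) auto
          finally have t1: "2 * (1 + Lx)^2 * Z^2 \<le> (2 * (1 + Lx)^2 / m1) * ((x1 t - x1s) \<bullet> (P1 *v (x1 t - x1s)))" .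
          have "2 * c2^2 * Y^2 = (2 * c2^2 / (\<kappa> * m2)) * (\<kappa> * (m2 * Y^2))" using m2 \<kappa> by simp
          also have "\<dots> \<le> (2 * c2^2 / (\<kappa> * m2)) * (\<kappa> * (f2 (x1 t) (x2 t) \<bullet> (P2 *v f2 (x1 t) (x2 t))))"
            using v2 m2 \<kappa> by (intro mult_left_mono) auto
          finally have t2: "2 * c2^2 * Y^2 \<le> (2 * c2^2 / (\<kappa> * m2)) * (\<kappa> * (f2 (x1 t) (x2 t) \<bullet> (P2 *v f2 (x1 t) (x2 t))))" .
          have t3: "(2 * (1 + Lx)^2 / m1) * ((x1 t - x1s) \<bullet> (P1 *v (x1 t - x1s))) \<le> G1 * ((x1 t - x1s) \<bullet> (P1 *v (x1 t - x1s)))"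
            using w1 m2 \<kappa> by (intro mult_right_mono) (auto simp: G1_def)
          have t4: "(2 * c2^2 / (\<kappa> * m2)) * (\<kappa> * (f2 (x1 t) (x2 t) \<bullet> (P2 *v f2 (x1 t) (x2 t)))) \<le> G1 * (\<kappa> * (f2 (x1 t) (x2 t) \<bullet> (P2 *v f2 (x1 t) (x2 t))))"
            using w2 m1 \<kappa> by (intro mult_right_mono) (auto simp: G1_def)
          have "G1 * U t = G1 * ((x1 t - x1s) \<bullet> (P1 *v (x1 t - x1s))) + G1 * (\<kappa> * (f2 (x1 t) (x2 t) \<bullet> (P2 *v f2 (x1 t) (x2 t))))"
            by (simp add: U_def V_def algebra_simps)
          then show ?thesis using t1 t2 t3 t4 by linarith
        qed
        finally show ?thesis .
      qed
      have "(norm (w t - we))^2 \<le> G1 * A * exp (- c * t) * (norm (w 0 - we))^2"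
      proof -
        have "G1 * U t \<le> G1 * (U 0 * exp (- c * t))" using Udec G1 by (intro mult_left_mono) auto
        also have "\<dots> \<le> G1 * (A * (norm (w 0 - we))^2 * exp (- c * t))"
          using U0 G1 by (intro mult_left_mono mult_right_mono) auto
        finally show ?thesis using Nt by (simp add: algebra_simps)
      qed
      then show ?thesis unfolding M_def
        by (rule sqrt_bound) (use G1 A in auto)
    qed

    have ex: "\<exists>x. ode_sol Fps x \<and> x 0 = x0" for x0
    proof (rule loc_exists)
      show "\<forall>z. \<exists>e>0. \<exists>L. L-lipschitz_on (ball z e) Fps" using ps_loc_lip by (simp add: Fps_def)
      fix T y assume "0 \<le> T" "sol_on Fps T y" "y 0 = x0"
      show "\<forall>t\<in>{0..T}. norm (y t) \<le> norm we + M * norm (x0 - we)"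
      proof
        fix t assume t: "t \<in> {0..T}"
        have "norm (y t - we) \<le> M * exp (- (c/2) * t) * norm (y 0 - we)"
          by (rule est) fact+
        also have "\<dots> \<le> M * 1 * norm (y 0 - we)"
          using M c t by (intro mult_right_mono mult_left_mono) auto
        finally have "norm (y t - we) \<le> M * norm (x0 - we)" using \<open>y 0 = x0\<close> by simp
        moreover have "norm (y t) \<le> norm we + norm (y t - we)" by (rule norm_triangle_sub)
        ultimately show "norm (y t) \<le> norm we + M * norm (x0 - we)" by simp
      qed
    qed
    have D: "\<forall>x. ode_sol Fps x \<longrightarrow> (\<forall>t\<ge>0. norm (x t - we) \<le> M * exp (- (c/2) * t) * norm (x 0 - we))"
      using est[OF _ ode_sol_sol_on] by auto
    have "M > 0 \<and> c/2 > 0" using M c by simp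
    with D have "\<exists>M>0. \<exists>lam>0. \<forall>x. ode_sol Fps x \<longrightarrow> (\<forall>t\<ge>0. norm (x t - we) \<le> M * exp (- lam * t) * norm (x 0 - we))"
      by blast
    then have "GES Fps we"
      unfolding GES_def using Fwe ex by blast
    then show ?thesis by (simp add: Fps_def we_def)
  qed

  show ?thesis using GES_ps GES_red GES_fast by blast
qed

end
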